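(* Let $n\ge 1$ and let $x_1,\dots,x_n$ be distinct integers, each greater than $1$, and let $D=\{1,0,x_1,\dots,x_n\}$. Then $diam(D)=3$ if $n=1$ and $diam(D)=4$ if $n>1$.
   Context: A signed tree is a pair $(T,s)$ where $T$ is a finite tree and $s:E(T)\to\{+,-\}$. The signed degree $sdeg(v)$ of a vertex is the number of incident positive edges minus the number of incident negative edges. $(T,s)$ realizes (satisfies) a set $D$ of integers if $D=\{sdeg(v):v\in V(T)\}$. For a set $D$ containing $1$ or $-1$, $diam(D)=\min\{diam(T): \text{some signed tree }(T,s)\text{ realizes }D\}$, where $diam(T)$ is the diameter of the tree $T$. *)

theory Defs
  imports Main
begin

text \<open>Finite simple graphs with vertex set V and edge set E (edges are 2-element sets).
  Vertices are natural numbers; every finite tree is isomorphic to one of this form.\<close>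

definition is_graph :: "nat set \<Rightarrow> nat set set \<Rightarrow> bool" where
  "is_graph V E \<longleftrightarrow> finite V \<and> (\<forall>e\<in>E. e \<subseteq> V \<and> card e = 2)"

definition is_walk :: "nat set \<Rightarrow> nat set set \<Rightarrow> nat list \<Rightarrow> bool" where
  "is_walk V E ws \<longleftrightarrow> ws \<noteq> [] \<and> set ws \<subseteq> V \<and>
     (\<forall>i. Suc i < length ws \<longrightarrow> {ws ! i, ws ! Suc i} \<in> E)"

definition connected_graph :: "nat set \<Rightarrow> nat set set \<Rightarrow> bool" where
  "connected_graph V E \<longleftrightarrow>
     (\<forall>u\<in>V. \<forall>v\<in>V. \<exists>ws. is_walk V E ws \<and> hd ws = u \<and> last ws = v)"

definition is_cycle :: "nat set \<Rightarrow> nat set set \<Rightarrow> nat list \<Rightarrow> bool" where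
  "is_cycle V E cs \<longleftrightarrow> length cs \<ge> 3 \<and> distinct cs \<and> is_walk V E cs \<and> {last cs, hd cs} \<in> E"

definition is_tree :: "nat set \<Rightarrow> nat set set \<Rightarrow> bool" where
  "is_tree V E \<longleftrightarrow> is_graph V E \<and> V \<noteq> {} \<and> connected_graph V E \<and> (\<nexists>cs. is_cycle V E cs)"

definition gdist :: "nat set \<Rightarrow> nat set set \<Rightarrow> nat \<Rightarrow> nat \<Rightarrow> nat" where
  "gdist V E u v = (LEAST k. \<exists>ws. is_walk V E ws \<and> hd ws = u \<and> last ws = v \<and> length ws = Suc k)"

definition tree_diam :: "nat set \<Rightarrow> nat set set \<Rightarrow> nat" where
  "tree_diam V E = Max {gdist V E u v | u v. u \<in> V \<and> v \<in> V}"

text \<open>Signing: s e = True means the edge e is positive, False means negative.\<close>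
definition sdeg :: "nat set set \<Rightarrow> (nat set \<Rightarrow> bool) \<Rightarrow> nat \<Rightarrow> int" where
  "sdeg E s v = int (card {e\<in>E. v \<in> e \<and> s e}) - int (card {e\<in>E. v \<in> e \<and> \<not> s e})"

definition realizes :: "nat set \<Rightarrow> nat set set \<Rightarrow> (nat set \<Rightarrow> bool) \<Rightarrow> int set \<Rightarrow> bool" where
  "realizes V E s D \<longleftrightarrow> D = sdeg E s ` V"

text \<open>diam(D): minimum diameter of a signed tree realizing D (meaningful when 1 or -1 is in D).\<close>
definition diam_set :: "int set \<Rightarrow> nat" where
  "diam_set D = (LEAST d. \<exists>V E s. is_tree V E \<and> realizes V E s D \<and> tree_diam V E = d)"

end

theory Submission
  imports Defs "HOL-Library.Nat_Bijection"
begin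


fun wk :: "nat set set \<Rightarrow> nat list \<Rightarrow> bool" where
  "wk E (a#b#xs) = ({a,b}\<in>E \<and> wk E (b#xs))" | "wk E _ = True"

lemma wk_iff: "wk E xs \<longleftrightarrow> (\<forall>i. Suc i < length xs \<longrightarrow> {xs ! i, xs ! Suc i} \<in> E)"
proof (induction E xs rule: wk.induct)
  case (1 E a b xs)
  show ?case
  proof
    assume "wk E (a # b # xs)"
    then show "\<forall>i. Suc i < length (a # b # xs) \<longrightarrow> {(a # b # xs) ! i, (a # b # xs) ! Suc i} \<in> E"
      using 1 by (auto simp: nth_Cons split: nat.split)
  next
    assume h: "\<forall>i. Suc i < length (a # b # xs) \<longrightarrow> {(a # b # xs) ! i, (a # b # xs) ! Suc i} \<in> E"
    have "{a,b}\<in>E" using h[rule_format, of 0] by simp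
    moreover have "\<forall>i. Suc i < length (b # xs) \<longrightarrow> {(b # xs) ! i, (b # xs) ! Suc i} \<in> E"
      using h by (metis Suc_less_eq length_Cons nth_Cons_Suc)
    ultimately show "wk E (a # b # xs)" using 1 by simp
  qed
qed auto

lemma is_walk_wk: "is_walk V E ws \<longleftrightarrow> ws \<noteq> [] \<and> set ws \<subseteq> V \<and> wk E ws"
  unfolding is_walk_def wk_iff by simp

lemma wk_append: "wk E (xs @ y # ys) \<longleftrightarrow> wk E (xs @ [y]) \<and> wk E (y # ys)"
  by (induction xs rule: induct_list012) auto

lemma wk_Cons: "wk E (a # xs) \<Longrightarrow> wk E xs"
  by (cases xs) auto

lemma wk_rev: "wk E (rev xs) \<longleftrightarrow> wk E xs"
proof (induction xs rule: wk.induct[of _ E])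
  case (1 E a b xs)
  have "rev (a # b # xs) = rev xs @ b # [a]" by simp
  then show ?case using 1 wk_append[of E "rev xs" b "[a]"] by (auto simp add: insert_commute)
qed auto

fun nb :: "nat list \<Rightarrow> bool" where
  "nb (a#b#c#xs) = (a \<noteq> c \<and> nb (b#c#xs))" | "nb _ = True"

lemma nb_Cons: "nb (a # xs) \<Longrightarrow> nb xs"
  by (cases xs rule: nb.cases) auto

lemma nb_snoc: "nb (xs @ [a]) \<Longrightarrow> nb xs"
  by (induction xs rule: nb.induct) auto

lemma nb_iff: "nb xs \<longleftrightarrow> (\<forall>i. Suc (Suc i) < length xs \<longrightarrow> xs ! i \<noteq> xs ! Suc (Suc i))"
proof (induction xs rule: nb.induct)
  case (1 a b c xs)
  show ?case
  proof
    assume "nb (a # b # c # xs)"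
    then show "\<forall>i. Suc (Suc i) < length (a # b # c # xs) \<longrightarrow> (a # b # c # xs) ! i \<noteq> (a # b # c # xs) ! Suc (Suc i)"
      using 1 by (auto simp: nth_Cons split: nat.split)
  next
    assume h: "\<forall>i. Suc (Suc i) < length (a # b # c # xs) \<longrightarrow> (a # b # c # xs) ! i \<noteq> (a # b # c # xs) ! Suc (Suc i)"
    have "a \<noteq> c" using h[rule_format, of 0] by simp
    moreover have "\<forall>i. Suc (Suc i) < length (b # c # xs) \<longrightarrow> (b # c # xs) ! i \<noteq> (b # c # xs) ! Suc (Suc i)"
      using h by (metis Suc_less_eq length_Cons nth_Cons_Suc)
    ultimately show "nb (a # b # c # xs)" using 1 by simp
  qed
qed auto

lemma nb_rev: "nb (rev xs) \<longleftrightarrow> nb xs"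
proof -
  have "(\<forall>i. Suc (Suc i) < length xs \<longrightarrow> rev xs ! i \<noteq> rev xs ! Suc (Suc i)) \<longleftrightarrow>
        (\<forall>i. Suc (Suc i) < length xs \<longrightarrow> xs ! i \<noteq> xs ! Suc (Suc i))"
  proof
    assume h: "\<forall>i. Suc (Suc i) < length xs \<longrightarrow> rev xs ! i \<noteq> rev xs ! Suc (Suc i)"
    show "\<forall>i. Suc (Suc i) < length xs \<longrightarrow> xs ! i \<noteq> xs ! Suc (Suc i)"
    proof (intro allI impI)
      fix i assume i: "Suc (Suc i) < length xs"
      have "rev xs ! (length xs - Suc (Suc (Suc i))) \<noteq> rev xs ! Suc (Suc (length xs - Suc (Suc (Suc i))))"
        using h i by auto
      moreover have "Suc (Suc (length xs - Suc (Suc (Suc i)))) = length xs - Suc i" using i by auto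
      ultimately show "xs ! i \<noteq> xs ! Suc (Suc i)" using i by (auto simp: rev_nth)
    qed
  next
    assume h: "\<forall>i. Suc (Suc i) < length xs \<longrightarrow> xs ! i \<noteq> xs ! Suc (Suc i)"
    show "\<forall>i. Suc (Suc i) < length xs \<longrightarrow> rev xs ! i \<noteq> rev xs ! Suc (Suc i)"
    proof (intro allI impI)
      fix i assume i: "Suc (Suc i) < length xs"
      have "xs ! (length xs - Suc (Suc (Suc i))) \<noteq> xs ! Suc (Suc (length xs - Suc (Suc (Suc i))))"
        using h i by auto
      moreover have "Suc (Suc (length xs - Suc (Suc (Suc i)))) = length xs - Suc i" using i by auto
      ultimately show "rev xs ! i \<noteq> rev xs ! Suc (Suc i)" using i by (auto simp: rev_nth)
    qed
  qed
  then show ?thesis unfolding nb_iff by simp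
qed

lemma nb_app: "nb (xs @ [a, b]) \<Longrightarrow> nb (a # b # ys) \<Longrightarrow> nb (xs @ a # b # ys)"
proof (induction xs rule: induct_list012)
  case (3 x y zs)
  then show ?case by (cases zs) auto
qed auto

lemma walk_take: "is_walk V E xs \<Longrightarrow> 0 < m \<Longrightarrow> is_walk V E (take m xs)"
  unfolding is_walk_def by (auto dest: in_set_takeD)

lemma edge_neq: "is_graph V E \<Longrightarrow> {a,b} \<in> E \<Longrightarrow> a \<noteq> b"
  unfolding is_graph_def by force

lemma nb_distinct:
  assumes g: "is_graph V E" and ac: "\<not>(\<exists>cs. is_cycle V E cs)"
  shows "is_walk V E xs \<Longrightarrow> nb xs \<Longrightarrow> distinct xs"
proof (induction xs)
  case Nil then show ?case by simp
next
  case (Cons a ys)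
  show ?case
  proof (cases "ys = []")
    case True then show ?thesis by simp
  next
    case False
    have wy: "is_walk V E ys" using Cons.prems False by (auto simp: is_walk_wk dest: wk_Cons)
    have dy: "distinct ys" using Cons.IH wy Cons.prems nb_Cons by blast
    have "a \<notin> set ys"
    proof
      assume "a \<in> set ys"
      then obtain k where k: "k < length ys" "ys ! k = a" by (meson in_set_conv_nth)
      have wa: "\<And>i. Suc i < length (a#ys) \<Longrightarrow> {(a#ys) ! i, (a#ys) ! Suc i} \<in> E"
        using Cons.prems unfolding is_walk_def by blast
      consider "k = 0" | "k = 1" | "k \<ge> 2" by linarith
      then show False
      proof cases
        case 1
        then show False using wa[of 0] k edge_neq[OF g] by fastforce
      next
        case 2
        then show False using Cons.prems(2) k unfolding nb_iff
          by (metis Suc_1 length_Cons not_less_eq nth_Cons_0 nth_Cons_Suc numeral_1_eq_Suc_0 numerals(1))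
      next
        case 3
        define cs where "cs = take (Suc k) (a # ys)"
        have cs2: "cs = a # take k ys" unfolding cs_def by simp
        have "is_walk V E cs" unfolding cs_def using walk_take[OF Cons.prems(1), of "Suc k"] by blast
        moreover have "length cs \<ge> 3" unfolding cs_def using 3 k by simp
        moreover have "distinct cs"
        proof -
          have "a \<notin> set (take k ys)"
          proof
            assume "a \<in> set (take k ys)"
            then obtain j where "j < k" "ys ! j = a" using k
              by (auto simp: in_set_conv_nth)
            then show False using k dy nth_eq_iff_index_eq by fastforce
          qed
          then show ?thesis using cs2 dy by simp
        qed
        moreover have "{last cs, hd cs} \<in> E"
        proof -
          have "last cs = (a#ys) ! k" unfolding cs_def using k False by (simp add: last_conv_nth)
          moreover have "hd cs = (a#ys) ! Suc k" using cs2 k by simp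
          ultimately show ?thesis using wa[of k] k by simp
        qed
        ultimately show False using ac unfolding is_cycle_def by blast
      qed
    qed
    then show ?thesis using dy by simp
  qed
qed

lemma distinct_hd_last: "distinct xs \<Longrightarrow> length xs \<ge> 2 \<Longrightarrow> hd xs \<noteq> last xs"
  by (cases xs) (auto simp: last_in_set dest: last_in_set)

lemma walk_tl: "is_walk V E (a # xs) \<Longrightarrow> xs \<noteq> [] \<Longrightarrow> is_walk V E xs"
  by (auto simp: is_walk_wk dest: wk_Cons)

lemma walk_rev: "is_walk V E xs \<Longrightarrow> is_walk V E (rev xs)"
  by (auto simp: is_walk_wk wk_rev)

lemma walk_concat: "is_walk V E xs \<Longrightarrow> is_walk V E ys \<Longrightarrow> last xs = hd ys \<Longrightarrow> is_walk V E (xs @ tl ys)"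
proof -
  assume a: "is_walk V E xs" "is_walk V E ys" "last xs = hd ys"
  obtain xs' where x: "xs = xs' @ [last xs]" using a(1) unfolding is_walk_def
    by (metis append_butlast_last_id)
  obtain ys' where y: "ys = hd ys # ys'" using a(2) unfolding is_walk_def
    by (metis list.exhaust_sel)
  have "xs @ tl ys = xs' @ last xs # ys'" using x y by (metis append.assoc append_Cons append_Nil list.sel(3))
  moreover have "wk E (xs' @ [last xs])" using a x by (simp add: is_walk_wk)
  moreover have "wk E (last xs # ys')" using a y by (metis is_walk_wk)
  ultimately show ?thesis using a x y unfolding is_walk_wk
    by (metis (no_types, lifting) Nil_is_append_conv Un_subset_iff list.sel(3) set_append set_subset_Cons
        subset_trans wk_append)
qed

lemma nb_unique:
  assumes g: "is_graph V E" and ac: "\<not>(\<exists>cs. is_cycle V E cs)"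
  shows "is_walk V E P \<Longrightarrow> is_walk V E W \<Longrightarrow> nb P \<Longrightarrow> nb W \<Longrightarrow> hd P = hd W \<Longrightarrow> last P = last W \<Longrightarrow> P = W"
proof (induction P arbitrary: W)
  case Nil then show ?case by (simp add: is_walk_def)
next
  case (Cons u P')
  obtain W' where W: "W = u # W'" using Cons.prems unfolding is_walk_def by (metis list.collapse list.sel(1))
  have dW: "distinct W" using nb_distinct[OF g ac] Cons.prems by blast
  have dP: "distinct (u # P')" using nb_distinct[OF g ac] Cons.prems by blast
  show ?case
  proof (cases P')
    case Nil
    show ?thesis
    proof (cases W')
      case Nil then show ?thesis using W \<open>P' = []\<close> by simp
    next
      case (Cons w1 W'')
      then have "hd W \<noteq> last W" using distinct_hd_last[OF dW] W by simp
      then show ?thesis using Cons.prems \<open>P' = []\<close> W by simp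
    qed
  next
    case (Cons p1 P'')
    show ?thesis
    proof (cases W')
      case Nil
      have "hd (u # P') \<noteq> last (u # P')" using distinct_hd_last[OF dP] \<open>P' = p1 # P''\<close> by simp
      then show ?thesis using Cons.prems W Nil by simp
    next
      case (Cons w1 W'')
      show ?thesis
      proof (cases "p1 = w1")
        case True
        have "P' = W'"
        proof (rule Cons.IH)
          show "is_walk V E P'" using walk_tl Cons.prems(1) \<open>P' = p1 # P''\<close> by blast
          show "is_walk V E W'" using walk_tl Cons.prems(2) W \<open>W' = w1 # W''\<close> by blast
          show "nb P'" using nb_Cons Cons.prems(3) by blast
          show "nb W'" using nb_Cons Cons.prems(4) W by blast
          show "hd P' = hd W'" using True \<open>P' = p1 # P''\<close> \<open>W' = w1 # W''\<close> by simp
          show "last P' = last W'" using Cons.prems(6) W \<open>P' = p1 # P''\<close> \<open>W' = w1 # W''\<close> by simp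
        qed
        then show ?thesis using W by simp
      next
        case False
        define Q where "Q = rev W @ tl (u # P')"
        have Q2: "Q = rev W'' @ w1 # u # (p1 # P'')"
          unfolding Q_def using W \<open>W' = w1 # W''\<close> \<open>P' = p1 # P''\<close> by simp
        have wQ: "is_walk V E Q" unfolding Q_def
          by (rule walk_concat) (use Cons.prems W walk_rev[of V E W] in \<open>auto simp del: rev.simps simp: last_rev\<close>)
        have "nb Q" unfolding Q2
        proof (rule nb_app)
          have "rev W'' @ [w1, u] = rev W" using W \<open>W' = w1 # W''\<close> by simp
          then show "nb (rev W'' @ [w1, u])" using nb_rev Cons.prems(4) by simp
          show "nb (w1 # u # p1 # P'')" using False Cons.prems(3) \<open>P' = p1 # P''\<close> by simp
        qed
        then have "distinct Q" using nb_distinct[OF g ac] wQ by blast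
        moreover have "length Q \<ge> 2" unfolding Q2 by simp
        moreover have "hd Q = last Q"
        proof -
          have "hd Q = last W" unfolding Q_def using W by (simp add: hd_rev)
          moreover have "last Q = last (u # P')" unfolding Q_def using \<open>P' = p1 # P''\<close> by simp
          ultimately show ?thesis using Cons.prems(6) by simp
        qed
        ultimately show ?thesis using distinct_hd_last by blast
      qed
    qed
  qed
qed

lemma not_nb: "\<not> nb xs \<Longrightarrow> \<exists>ys a b zs. xs = ys @ a # b # a # zs"
proof (induction xs rule: nb.induct)
  case (1 a b c xs)
  show ?case
  proof (cases "a = c")
    case True then show ?thesis by (metis append_Nil)
  next
    case False
    then obtain ys a' b' zs where "b # c # xs = ys @ a' # b' # a' # zs" using 1 by auto
    then have "a # b # c # xs = (a # ys) @ a' # b' # a' # zs" by simp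
    then show ?thesis by blast
  qed
qed auto

lemma least_walk:
  assumes "connected_graph V E" "u \<in> V" "v \<in> V"
  shows "\<exists>W. is_walk V E W \<and> hd W = u \<and> last W = v \<and> length W = Suc (gdist V E u v)"
proof -
  obtain ws where ws: "is_walk V E ws" "hd ws = u" "last ws = v"
    using assms unfolding connected_graph_def by blast
  then have "\<exists>k ws. is_walk V E ws \<and> hd ws = u \<and> last ws = v \<and> length ws = Suc k"
    unfolding is_walk_def by (metis Suc_pred length_greater_0_conv)
  then show ?thesis unfolding gdist_def by (rule LeastI_ex)
qed

lemma gdist_le:
  assumes "is_walk V E W" "hd W = u" "last W = v"
  shows "gdist V E u v \<le> length W - 1"
proof -
  have "length W = Suc (length W - 1)" using assms unfolding is_walk_def by simp
  then show ?thesis unfolding gdist_def using assms by (intro Least_le) blast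
qed

lemma least_nb:
  assumes "is_walk V E W" "hd W = u" "last W = v" "length W = Suc (gdist V E u v)"
  shows "nb W"
proof (rule ccontr)
  assume "\<not> nb W"
  then obtain ys a b zs where W: "W = ys @ a # b # a # zs" using not_nb by blast
  define W' where "W' = ys @ a # zs"
  have wkW: "wk E (ys @ [a])" "wk E (a # b # a # zs)" using assms(1) W wk_append unfolding is_walk_wk by blast+
  then have "wk E (a # zs)" by (cases zs) auto
  then have "wk E W'" unfolding W'_def using wkW wk_append by blast
  moreover have "set W' \<subseteq> V" using assms(1) W unfolding W'_def is_walk_def by auto
  ultimately have "is_walk V E W'" unfolding is_walk_wk W'_def by simp
  moreover have "hd W' = u" using assms(2) W unfolding W'_def by (cases ys) auto
  moreover have "last W' = v" using assms(3) W unfolding W'_def by (cases zs) auto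
  ultimately have "gdist V E u v \<le> length W' - 1" using gdist_le by blast
  then show False using assms(4) W unfolding W'_def by simp
qed

lemma gdist_nb:
  assumes t: "is_tree V E" and P: "is_walk V E P" "nb P" "hd P = u" "last P = v"
  shows "gdist V E u v = length P - 1"
proof -
  have g: "is_graph V E" and c: "connected_graph V E" and ac: "\<not>(\<exists>cs. is_cycle V E cs)"
    using t unfolding is_tree_def by auto
  have uv: "u \<in> V" "v \<in> V" using P unfolding is_walk_def by auto
  obtain W where W: "is_walk V E W" "hd W = u" "last W = v" "length W = Suc (gdist V E u v)"
    using least_walk[OF c uv] by blast
  have "nb W" using least_nb[OF W] .
  then have "W = P" using nb_unique[OF g ac W(1) P(1)] W P by simp
  then show ?thesis using W by simp
qed

lemma gdist_set_eq: "{gdist V E u v | u v. u \<in> V \<and> v \<in> V} = (\<lambda>(u,v). gdist V E u v) ` (V \<times> V)"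
  by auto

lemma diam_ge_gdist:
  assumes "finite V" "u \<in> V" "v \<in> V"
  shows "gdist V E u v \<le> tree_diam V E"
  unfolding tree_diam_def gdist_set_eq using assms by (intro Max_ge) auto

lemma edge_in_V: "is_graph V E \<Longrightarrow> {a,b} \<in> E \<Longrightarrow> a \<in> V \<and> b \<in> V"
  unfolding is_graph_def by blast

lemma walk2: "is_graph V E \<Longrightarrow> {a,b} \<in> E \<Longrightarrow> is_walk V E [a,b]"
  using edge_in_V[of V E a b] unfolding is_walk_wk by auto

lemma diam_ge:
  assumes t: "is_tree V E" and uv: "u \<in> V" "v \<in> V" "u \<noteq> v"
    and a: "{u,a1} \<in> E" "{u,a2} \<in> E" "a1 \<noteq> a2"
    and b: "{v,b1} \<in> E" "{v,b2} \<in> E" "b1 \<noteq> b2"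
  shows "gdist V E u v + 2 \<le> tree_diam V E"
proof -
  have g: "is_graph V E" and c: "connected_graph V E" and fV: "finite V"
    using t unfolding is_tree_def is_graph_def by auto
  obtain W where W: "is_walk V E W" "hd W = u" "last W = v" "length W = Suc (gdist V E u v)"
    using least_walk[OF c uv(1,2)] by blast
  have nW: "nb W" using least_nb[OF W] .
  have "length W \<ge> 2"
  proof (rule ccontr)
    assume "\<not> length W \<ge> 2"
    then have "length W = 1" using W(4) by simp
    then obtain z where "W = [z]" by (metis One_nat_def length_0_conv length_Suc_conv)
    then show False using W uv by simp
  qed
  then obtain w1 W1 where W1: "W = u # w1 # W1" using W(2)
    by (metis One_nat_def Suc_1 Suc_le_length_iff list.sel(1))
  obtain Z z where Z: "W = Z @ [z, v]"
  proof -
    have ne: "W \<noteq> []" "butlast W \<noteq> []" using W1 by auto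
    have "W = butlast W @ [v]" using append_butlast_last_id[OF ne(1)] W(3) by simp
    also have "butlast W = butlast (butlast W) @ [last (butlast W)]" using append_butlast_last_id[OF ne(2)] by simp
    finally show ?thesis using that by simp
  qed
  obtain u' where u': "{u,u'} \<in> E" "u' \<noteq> w1" using a by blast
  obtain v' where v': "{v,v'} \<in> E" "v' \<noteq> z" using b by blast
  define X where "X = u' # W @ [v']"
  have "nb (W @ [v'])" unfolding Z using nb_app[of Z z v "[v']"] nW Z v' by simp
  then have nX: "nb X" unfolding X_def using W1 u' by simp
  have "is_walk V E ([u',u] @ tl W)"
    by (rule walk_concat) (use walk2[OF g, of u' u] u' W in \<open>auto simp: insert_commute\<close>)
  then have "is_walk V E (([u',u] @ tl W) @ tl [v,v'])"
    by (rule walk_concat) (use walk2[OF g, of v v'] v' W W1 in auto)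
  moreover have "([u',u] @ tl W) @ tl [v,v'] = X" unfolding X_def using W1 by simp
  ultimately have wX: "is_walk V E X" by simp
  have "gdist V E u' v' = length X - 1"
    by (rule gdist_nb[OF t wX nX]) (auto simp: X_def)
  moreover have "gdist V E u' v' \<le> tree_diam V E"
    using diam_ge_gdist[OF fV] edge_in_V[OF g u'(1)] edge_in_V[OF g v'(1)] by blast
  ultimately show ?thesis unfolding X_def using W(4) by simp
qed

lemma card2_two: "2 \<le> card S \<Longrightarrow> \<exists>x\<in>S. \<exists>y\<in>S. x \<noteq> y"
proof -
  assume h: "2 \<le> card S"
  then have "finite S" "S \<noteq> {}" by (auto intro: card_ge_0_finite)
  then obtain x where x: "x \<in> S" by blast
  have "card (S - {x}) \<ge> 1" using h x \<open>finite S\<close> by simp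
  then have "S - {x} \<noteq> {}" by (metis card.empty not_one_le_zero)
  then obtain y where "y \<in> S - {x}" by blast
  then show ?thesis using x by blast
qed

lemma edge_other: "is_graph V E \<Longrightarrow> e \<in> E \<Longrightarrow> w \<in> e \<Longrightarrow> \<exists>y. e = {w,y} \<and> y \<noteq> w"
  unfolding is_graph_def by (metis card_2_iff insert_commute insert_iff singleton_iff)

lemma two_nbrs_pos:
  assumes g: "is_graph V E" and d: "sdeg E s w \<ge> 2"
  shows "\<exists>a1 a2. a1 \<noteq> a2 \<and> {w,a1} \<in> E \<and> {w,a2} \<in> E"
proof -
  have "card {e\<in>E. w \<in> e \<and> s e} \<ge> 2" using d unfolding sdeg_def by linarith
  then obtain e1 e2 where e: "e1 \<in> E" "w \<in> e1" "e2 \<in> E" "w \<in> e2" "e1 \<noteq> e2"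
    using card2_two by blast
  obtain y1 where "e1 = {w,y1}" using edge_other[OF g e(1,2)] by blast
  moreover obtain y2 where "e2 = {w,y2}" using edge_other[OF g e(3,4)] by blast
  ultimately show ?thesis using e by blast
qed

lemma two_nbrs_zero:
  assumes g: "is_graph V E" and c: "connected_graph V E" and wb: "w \<in> V" "b \<in> V" "b \<noteq> w"
    and d: "sdeg E s w = 0"
  shows "\<exists>a1 a2. a1 \<noteq> a2 \<and> {w,a1} \<in> E \<and> {w,a2} \<in> E"
proof -
  have fE: "finite E"
  proof -
    have "E \<subseteq> Pow V" using g unfolding is_graph_def by blast
    then show ?thesis using g unfolding is_graph_def by (meson finite_Pow_iff finite_subset)
  qed
  obtain ws where ws: "is_walk V E ws" "hd ws = w" "last ws = b" using c wb unfolding connected_graph_def by blast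
  have "length ws \<ge> 2"
  proof (rule ccontr)
    assume "\<not> length ws \<ge> 2"
    moreover have "length ws \<noteq> 0" using ws unfolding is_walk_def by simp
    ultimately have "length ws = 1" by linarith
    then obtain z where "ws = [z]" by (metis One_nat_def length_0_conv length_Suc_conv)
    then show False using ws wb by simp
  qed
  then have e0: "{ws!0, ws!1} \<in> E" using ws unfolding is_walk_def by auto
  have "ws ! 0 = w" using ws \<open>length ws \<ge> 2\<close> by (cases ws) auto
  then have e0': "{w, ws!1} \<in> E" using e0 by simp
  let ?P = "{e\<in>E. w \<in> e \<and> s e}" and ?N = "{e\<in>E. w \<in> e \<and> \<not> s e}"
  have cPN: "card ?P = card ?N" using d unfolding sdeg_def by linarith
  have fin: "finite ?P" "finite ?N" using fE by auto
  have "?P \<noteq> {} \<or> ?N \<noteq> {}" using e0' by (cases "s {w, ws!1}") auto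
  moreover have "?P = {} \<longleftrightarrow> card ?P = 0" using fin(1) by simp
  moreover have "?N = {} \<longleftrightarrow> card ?N = 0" using fin(2) by simp
  ultimately have "?P \<noteq> {} \<and> ?N \<noteq> {}" using cPN by argo
  then obtain e1 e2 where e: "e1 \<in> E" "w \<in> e1" "s e1" "e2 \<in> E" "w \<in> e2" "\<not> s e2" by blast
  obtain y1 where y1: "e1 = {w,y1}" using edge_other[OF g e(1,2)] by blast
  obtain y2 where y2: "e2 = {w,y2}" using edge_other[OF g e(4,5)] by blast
  have "y1 \<noteq> y2" using e y1 y2 by auto
  then show ?thesis using e y1 y2 by blast
qed




lemma gdist_pos:
  assumes c: "connected_graph V E" and uv: "u \<in> V" "v \<in> V" "u \<noteq> v"
  shows "gdist V E u v \<ge> 1"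
proof (rule ccontr)
  assume "\<not> gdist V E u v \<ge> 1"
  then have "gdist V E u v = 0" by simp
  then obtain W where W: "is_walk V E W" "hd W = u" "last W = v" "length W = 1"
    using least_walk[OF c uv(1,2)] by auto
  then obtain z where "W = [z]" by (metis One_nat_def length_0_conv length_Suc_conv)
  then show False using W uv by simp
qed

lemma gdist_one:
  assumes c: "connected_graph V E" and uv: "u \<in> V" "v \<in> V" and d: "gdist V E u v = 1"
  shows "{u,v} \<in> E"
proof -
  obtain W where W: "is_walk V E W" "hd W = u" "last W = v" "length W = 2"
    using least_walk[OF c uv(1,2)] d by auto
  then obtain p q where "W = [p,q]"
    by (metis length_0_conv length_Suc_conv numeral_2_eq_2)
  then show ?thesis using W unfolding is_walk_def by fastforce
qed

definition two_nbrs :: "nat set set \<Rightarrow> nat \<Rightarrow> bool" where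
  "two_nbrs E w \<longleftrightarrow> (\<exists>a1 a2. a1 \<noteq> a2 \<and> {w,a1} \<in> E \<and> {w,a2} \<in> E)"

lemma diam_ge2:
  assumes t: "is_tree V E" and uv: "u \<in> V" "v \<in> V" "u \<noteq> v" and n: "two_nbrs E u" "two_nbrs E v"
  shows "gdist V E u v + 2 \<le> tree_diam V E"
  using n diam_ge[OF t uv] unfolding two_nbrs_def by blast

lemma lower3:
  assumes t: "is_tree V E" and uv: "u \<in> V" "v \<in> V" "u \<noteq> v" and n: "two_nbrs E u" "two_nbrs E v"
  shows "3 \<le> tree_diam V E"
  using diam_ge2[OF assms] gdist_pos[OF _ uv] t unfolding is_tree_def by fastforce

lemma lower4:
  assumes t: "is_tree V E" and abc: "a \<in> V" "b \<in> V" "c \<in> V" "a \<noteq> b" "a \<noteq> c" "b \<noteq> c"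
    and n: "two_nbrs E a" "two_nbrs E b" "two_nbrs E c"
  shows "4 \<le> tree_diam V E"
proof -
  have g: "is_graph V E" and co: "connected_graph V E" and ac: "\<not>(\<exists>cs. is_cycle V E cs)"
    using t unfolding is_tree_def by auto
  show ?thesis
  proof (cases "gdist V E a b = 1 \<and> gdist V E b c = 1 \<and> gdist V E a c = 1")
    case True
    then have e: "{a,b} \<in> E" "{b,c} \<in> E" "{a,c} \<in> E" using gdist_one[OF co] abc by auto
    have "is_walk V E [a,b,c]" using e abc unfolding is_walk_def by (auto simp: less_Suc_eq nth_Cons split: nat.split)
    then have "is_cycle V E [a,b,c]" using e abc unfolding is_cycle_def by (auto simp: insert_commute)
    then show ?thesis using ac by blast
  next
    case False
    then have "gdist V E a b \<ge> 2 \<or> gdist V E b c \<ge> 2 \<or> gdist V E a c \<ge> 2"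
      using gdist_pos[OF co] abc by fastforce
    then show ?thesis
    proof (elim disjE)
      assume "gdist V E a b \<ge> 2" then show ?thesis using diam_ge2[OF t abc(1,2,4) n(1,2)] by linarith
    next
      assume "gdist V E b c \<ge> 2" then show ?thesis using diam_ge2[OF t abc(2,3,6) n(2,3)] by linarith
    next
      assume "gdist V E a c \<ge> 2" then show ?thesis using diam_ge2[OF t abc(1,3,5) n(1,3)] by linarith
    qed
  qed
qed




lemma parent_edge:
  fixes p :: "nat \<Rightarrow> nat"
  assumes p: "\<forall>v\<in>V-{r}. p v \<in> V \<and> p v < v" and E: "E = (\<lambda>v. {v, p v}) ` (V - {r})"
    and e: "{m, y} \<in> E" and y: "y < m"
  shows "y = p m"
proof -
  obtain v where v: "v \<in> V - {r}" "{m,y} = {v, p v}" using e E by blast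
  then have "p v < v" using p by blast
  moreover have "(m = v \<and> y = p v) \<or> (m = p v \<and> y = v)" using v(2) by (simp add: doubleton_eq_iff)
  ultimately show ?thesis using y by auto
qed

lemma cycle_nbrs:
  assumes c: "is_cycle V E cs" and i: "i < length cs"
  shows "\<exists>j k. j < length cs \<and> k < length cs \<and> j \<noteq> k \<and> {cs!i, cs!j} \<in> E \<and> {cs!i, cs!k} \<in> E"
proof -
  let ?L = "length cs"
  have L: "?L \<ge> 3" using c unfolding is_cycle_def by simp
  have wk: "\<And>t. Suc t < ?L \<Longrightarrow> {cs!t, cs!Suc t} \<in> E" using c unfolding is_cycle_def is_walk_def by blast
  have lh: "{cs!(?L - 1), cs!0} \<in> E" using c L unfolding is_cycle_def
    by (metis hd_conv_nth last_conv_nth list.size(3) not_numeral_le_zero)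
  consider "i = 0" | "0 < i" "Suc i < ?L" | "Suc i = ?L" using i by linarith
  then show ?thesis
  proof cases
    case 1
    then show ?thesis using wk[of 0] lh L
      by (intro exI[of _ 1] exI[of _ "?L - 1"]) (auto simp: insert_commute)
  next
    case 2
    then show ?thesis using wk[of i] wk[of "i - 1"] L
      by (intro exI[of _ "Suc i"] exI[of _ "i - 1"]) (auto simp: insert_commute)
  next
    case 3
    then have i1: "i = ?L - 1" by simp
    have s1: "Suc (i-1) = i" "Suc (i-1) < ?L" using L i1 by auto
    have "{cs!(i-1), cs!i} \<in> E" using wk[OF s1(2)] unfolding s1(1) .
    moreover have "{cs!i, cs!0} \<in> E" using lh i1 by simp
    moreover have "0 \<noteq> i - 1" "i - 1 < ?L" using L i1 by auto
    ultimately show ?thesis using L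
      by (intro exI[of _ 0] exI[of _ "i - 1"]) (auto simp: insert_commute)
  qed
qed

lemma last_concat: "xs \<noteq> [] \<Longrightarrow> ys \<noteq> [] \<Longrightarrow> last xs = hd ys \<Longrightarrow> last (xs @ tl ys) = last ys"
  by (cases ys) auto

lemma parent_tree:
  fixes p :: "nat \<Rightarrow> nat"
  assumes fV: "finite V" and r: "r \<in> V" and p: "\<forall>v\<in>V-{r}. p v \<in> V \<and> p v < v"
    and E: "E = (\<lambda>v. {v, p v}) ` (V - {r})"
  shows "is_tree V E"
proof -
  have g: "is_graph V E" unfolding is_graph_def
  proof (intro conjI ballI)
    fix e assume "e \<in> E"
    then obtain v where v: "v \<in> V - {r}" "e = {v, p v}" using E by blast
    then have "p v < v" "p v \<in> V" using p by blast+
    then show "e \<subseteq> V" "card e = 2" using v by auto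
  qed (rule fV)
  have reach: "v \<in> V \<Longrightarrow> \<exists>W. is_walk V E W \<and> hd W = v \<and> last W = r" for v
  proof (induction v rule: less_induct)
    case (less v)
    show ?case
    proof (cases "v = r")
      case True
      then show ?thesis using r by (intro exI[of _ "[r]"]) (simp add: is_walk_def)
    next
      case False
      then have pv: "p v \<in> V" "p v < v" using p less.prems by auto
      then obtain W where W: "is_walk V E W" "hd W = p v" "last W = r" using less.IH by blast
      have e: "{v, p v} \<in> E" using E less.prems False by blast
      have "is_walk V E ([v, p v] @ tl W)" by (rule walk_concat) (use walk2[OF g e] W in auto)
      moreover have "[v, p v] @ tl W = v # W" using W unfolding is_walk_def by (cases W) auto
      ultimately have "is_walk V E (v # W)" by simp
      moreover have "last (v # W) = r" using W unfolding is_walk_def by simp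
      ultimately show ?thesis by (intro exI[of _ "v # W"]) simp
    qed
  qed
  have conn: "connected_graph V E" unfolding connected_graph_def
  proof (intro ballI)
    fix u v assume uv: "u \<in> V" "v \<in> V"
    obtain Wu where Wu: "is_walk V E Wu" "hd Wu = u" "last Wu = r" using reach uv by blast
    obtain Wv where Wv: "is_walk V E Wv" "hd Wv = v" "last Wv = r" using reach uv by blast
    have w: "is_walk V E (Wu @ tl (rev Wv))"
      by (rule walk_concat) (use Wu Wv walk_rev in \<open>auto simp: hd_rev\<close>)
    moreover have "hd (Wu @ tl (rev Wv)) = u" using Wu unfolding is_walk_def by simp
    moreover have "last (Wu @ tl (rev Wv)) = v"
      using last_concat[of Wu "rev Wv"] Wu Wv unfolding is_walk_def by (simp add: hd_rev last_rev)
    ultimately show "\<exists>ws. is_walk V E ws \<and> hd ws = u \<and> last ws = v" by blast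
  qed
  have ac: "\<nexists>cs. is_cycle V E cs"
  proof
    assume "\<exists>cs. is_cycle V E cs"
    then obtain cs where c: "is_cycle V E cs" by blast
    have ne: "cs \<noteq> []" using c unfolding is_cycle_def by auto
    define m where "m = Max (set cs)"
    have "m \<in> set cs" unfolding m_def using ne by simp
    then obtain i where i: "i < length cs" "cs ! i = m" by (meson in_set_conv_nth)
    obtain j k where jk: "j < length cs" "k < length cs" "j \<noteq> k" "{m, cs!j} \<in> E" "{m, cs!k} \<in> E"
      using cycle_nbrs[OF c i(1)] i by blast
    have "cs!j \<le> m" "cs!k \<le> m" unfolding m_def using jk by auto
    moreover have "cs!j \<noteq> m" "cs!k \<noteq> m" using edge_neq[OF g] jk by blast+
    ultimately have "cs!j < m" "cs!k < m" by auto
    then have "cs!j = p m" "cs!k = p m" using parent_edge[OF p E] jk by blast+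
    then have "cs!j = cs!k" by simp
    moreover have "distinct cs" using c unfolding is_cycle_def by simp
    ultimately show False using jk nth_eq_iff_index_eq[of cs j k] by simp
  qed
  show ?thesis unfolding is_tree_def using g conn ac r by blast
qed

lemma parent_card:
  fixes p :: "nat \<Rightarrow> nat"
  assumes p: "\<forall>v\<in>V-{r}. p v \<in> V \<and> p v < v" and E: "E = (\<lambda>v. {v, p v}) ` (V - {r})"
  shows "card {e\<in>E. w \<in> e \<and> P e} = card {v\<in>V-{r}. (v = w \<or> p v = w) \<and> P {v, p v}}"
proof -
  have inj: "inj_on (\<lambda>v. {v, p v}) (V - {r})"
  proof
    fix a b assume ab: "a \<in> V - {r}" "b \<in> V - {r}" "{a, p a} = {b, p b}"
    have "p a < a" "p b < b" using p ab by auto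
    moreover have "(a = b \<and> p a = p b) \<or> (a = p b \<and> p a = b)" using ab(3) by (simp add: doubleton_eq_iff)
    ultimately show "a = b" by auto
  qed
  have "{e\<in>E. w \<in> e \<and> P e} = (\<lambda>v. {v, p v}) ` {v\<in>V-{r}. (v = w \<or> p v = w) \<and> P {v, p v}}"
    using E by auto
  moreover have "inj_on (\<lambda>v. {v, p v}) {v\<in>V-{r}. (v = w \<or> p v = w) \<and> P {v, p v}}"
    using inj by (rule inj_on_subset) auto
  ultimately show ?thesis by (simp add: card_image)
qed




definition cV :: "nat \<Rightarrow> (nat \<Rightarrow> int) \<Rightarrow> nat set" where
  "cV n x = {0..2*n} \<union> {2*n+1 + prod_encode (i,j) | i j. i \<in> {1..n} \<and> j \<le> nat (x i)}"

definition cp :: "nat \<Rightarrow> nat \<Rightarrow> nat" where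
  "cp n v = (if v \<le> 2*n then 0 else fst (prod_decode (v - (2*n+1))))"

definition cE :: "nat \<Rightarrow> (nat \<Rightarrow> int) \<Rightarrow> nat set set" where
  "cE n x = (\<lambda>v. {v, cp n v}) ` (cV n x - {0})"

definition cs :: "nat \<Rightarrow> nat set \<Rightarrow> bool" where
  "cs n e = (\<forall>i\<in>{1..n}. e \<noteq> {0,i})"

lemma cp_leaf: "cp n (2*n+1 + prod_encode (i,j)) = i"
  unfolding cp_def by simp

lemma cV_cases: "v \<in> cV n x \<Longrightarrow> v \<le> 2*n \<or> (\<exists>i j. i \<in> {1..n} \<and> j \<le> nat (x i) \<and> v = 2*n+1 + prod_encode (i,j))"
  unfolding cV_def by auto

lemma cV_fin: "finite (cV n x)"
proof -
  have "{2*n+1 + prod_encode (i,j) | i j. i \<in> {1..n} \<and> j \<le> nat (x i)} \<subseteq>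
        (\<lambda>(i,j). 2*n+1 + prod_encode (i,j)) ` ({1..n} \<times> {..Max (nat ` x ` {1..n})})"
  proof
    fix v assume "v \<in> {2*n+1 + prod_encode (i,j) | i j. i \<in> {1..n} \<and> j \<le> nat (x i)}"
    then obtain i j where ij: "i \<in> {1..n}" "j \<le> nat (x i)" "v = 2*n+1 + prod_encode (i,j)" by blast
    have mx: "nat (x i) \<le> Max (nat ` x ` {1..n})" using ij by (intro Max_ge) auto
    show "v \<in> (\<lambda>(i,j). 2*n+1 + prod_encode (i,j)) ` ({1..n} \<times> {..Max (nat ` x ` {1..n})})"
    proof (rule image_eqI[of _ _ "(i,j)"])
      have "j \<le> Max (nat ` x ` {1..n})" using ij(2) mx by (rule le_trans)
      then show "(i, j) \<in> {1..n} \<times> {..Max (nat ` x ` {1..n})}" using ij(1) by blast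
    qed (use ij in simp)
  qed
  then show ?thesis unfolding cV_def by (meson finite_Un finite_atLeastAtMost finite_SigmaI finite_atMost finite_imageI finite_subset)
qed

lemma cp_ok: "\<forall>v\<in>cV n x - {0}. cp n v \<in> cV n x \<and> cp n v < v"
proof
  fix v assume v: "v \<in> cV n x - {0}"
  show "cp n v \<in> cV n x \<and> cp n v < v"
  proof (cases "v \<le> 2*n")
    case True
    then show ?thesis using v unfolding cp_def cV_def by auto
  next
    case False
    then obtain i j where ij: "i \<in> {1..n}" "j \<le> nat (x i)" "v = 2*n+1 + prod_encode (i,j)"
      using cV_cases v by blast
    have "i \<le> prod_encode (i,j)" by (rule le_prod_encode_1)
    then show ?thesis using ij cp_leaf[of n i j] unfolding cV_def by auto
  qed
qed

lemma c_tree: "is_tree (cV n x) (cE n x)"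
  by (rule parent_tree[OF cV_fin _ cp_ok cE_def]) (simp add: cV_def)

lemma cs_char: "v \<in> cV n x - {0} \<Longrightarrow> cs n {v, cp n v} \<longleftrightarrow> \<not> v \<le> n"
proof -
  assume v: "v \<in> cV n x - {0}"
  show ?thesis
  proof (cases "v \<le> 2*n")
    case True
    then have "cp n v = 0" unfolding cp_def by simp
    then show ?thesis using v unfolding cs_def by (auto simp: doubleton_eq_iff)
  next
    case False
    then have "cp n v < v" using cp_ok v by blast
    then show ?thesis using False unfolding cs_def by (auto simp: doubleton_eq_iff)
  qed
qed

lemma c_sdeg: "sdeg (cE n x) (cs n) w =
   int (card {v\<in>cV n x - {0}. (v = w \<or> cp n v = w) \<and> \<not> v \<le> n})
 - int (card {v\<in>cV n x - {0}. (v = w \<or> cp n v = w) \<and> v \<le> n})"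
proof -
  have "card {e\<in>cE n x. w \<in> e \<and> cs n e} = card {v\<in>cV n x - {0}. (v = w \<or> cp n v = w) \<and> cs n {v, cp n v}}"
    by (rule parent_card[OF cp_ok cE_def])
  also have "{v\<in>cV n x - {0}. (v = w \<or> cp n v = w) \<and> cs n {v, cp n v}} = {v\<in>cV n x - {0}. (v = w \<or> cp n v = w) \<and> \<not> v \<le> n}"
    using cs_char by blast
  finally have 1: "card {e\<in>cE n x. w \<in> e \<and> cs n e} = card {v\<in>cV n x - {0}. (v = w \<or> cp n v = w) \<and> \<not> v \<le> n}" .
  have "card {e\<in>cE n x. w \<in> e \<and> \<not> cs n e} = card {v\<in>cV n x - {0}. (v = w \<or> cp n v = w) \<and> \<not> cs n {v, cp n v}}"
    by (rule parent_card[OF cp_ok cE_def])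
  also have "{v\<in>cV n x - {0}. (v = w \<or> cp n v = w) \<and> \<not> cs n {v, cp n v}} = {v\<in>cV n x - {0}. (v = w \<or> cp n v = w) \<and> v \<le> n}"
    using cs_char by blast
  finally have 2: "card {e\<in>cE n x. w \<in> e \<and> \<not> cs n e} = card {v\<in>cV n x - {0}. (v = w \<or> cp n v = w) \<and> v \<le> n}" .
  show ?thesis unfolding sdeg_def 1 2 ..
qed




lemma cp_small: "v \<le> 2*n \<Longrightarrow> cp n v = 0"
  unfolding cp_def by simp

lemma cp_le: "v \<in> cV n x \<Longrightarrow> cp n v \<le> n"
  using cV_cases[of v n x] cp_leaf[of n] unfolding cp_def by (auto split: if_splits)

lemma cp_zero: "v \<in> cV n x \<Longrightarrow> cp n v = 0 \<longleftrightarrow> v \<le> 2*n"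
proof -
  assume v: "v \<in> cV n x"
  show ?thesis
  proof (cases "v \<le> 2*n")
    case False
    then obtain i j where ij: "i \<in> {1..n}" "j \<le> nat (x i)" "v = 2*n+1 + prod_encode (i,j)"
      using cV_cases v by blast
    then show ?thesis using cp_leaf[of n i j] by auto
  qed (simp add: cp_def)
qed

lemma sdeg_big: "w \<in> cV n x \<Longrightarrow> n < w \<Longrightarrow> sdeg (cE n x) (cs n) w = 1"
proof -
  assume w: "w \<in> cV n x" "n < w"
  have "{v\<in>cV n x - {0}. (v = w \<or> cp n v = w) \<and> \<not> v \<le> n} = {w}"
    using w cp_le by fastforce
  moreover have "{v\<in>cV n x - {0}. (v = w \<or> cp n v = w) \<and> v \<le> n} = {}"
    using w cp_le by fastforce
  ultimately show ?thesis unfolding c_sdeg by simp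
qed

lemma in_cV_small: "v \<le> 2*n \<Longrightarrow> v \<in> cV n x"
  unfolding cV_def by auto

lemma sdeg_root: "sdeg (cE n x) (cs n) 0 = 0"
proof -
  have "{v\<in>cV n x - {0}. (v = 0 \<or> cp n v = 0) \<and> \<not> v \<le> n} = {n+1..2*n}"
  proof (intro equalityI subsetI)
    fix v assume "v \<in> {v\<in>cV n x - {0}. (v = 0 \<or> cp n v = 0) \<and> \<not> v \<le> n}"
    then show "v \<in> {n+1..2*n}" using cp_zero[of v n x] by auto
  next
    fix v assume "v \<in> {n+1..2*n}"
    then show "v \<in> {v\<in>cV n x - {0}. (v = 0 \<or> cp n v = 0) \<and> \<not> v \<le> n}"
      using cp_small[of v n] in_cV_small[of v n x] by auto
  qed
  moreover have "{v\<in>cV n x - {0}. (v = 0 \<or> cp n v = 0) \<and> v \<le> n} = {1..n}"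
  proof (intro equalityI subsetI)
    fix v assume "v \<in> {v\<in>cV n x - {0}. (v = 0 \<or> cp n v = 0) \<and> v \<le> n}"
    then show "v \<in> {1..n}" by auto
  next
    fix v assume "v \<in> {1..n}"
    then show "v \<in> {v\<in>cV n x - {0}. (v = 0 \<or> cp n v = 0) \<and> v \<le> n}"
      using cp_small[of v n] in_cV_small[of v n x] by auto
  qed
  ultimately show ?thesis unfolding c_sdeg by simp
qed

lemma sdeg_mid:
  assumes i: "i \<in> {1..n}" and x: "x i > 1"
  shows "sdeg (cE n x) (cs n) i = x i"
proof -
  have "{v\<in>cV n x - {0}. (v = i \<or> cp n v = i) \<and> \<not> v \<le> n} = (\<lambda>j. 2*n+1 + prod_encode (i,j)) ` {..nat (x i)}"
  proof
    show "{v\<in>cV n x - {0}. (v = i \<or> cp n v = i) \<and> \<not> v \<le> n} \<subseteq> (\<lambda>j. 2*n+1 + prod_encode (i,j)) ` {..nat (x i)}"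
    proof
      fix v assume v: "v \<in> {v\<in>cV n x - {0}. (v = i \<or> cp n v = i) \<and> \<not> v \<le> n}"
      then have "cp n v = i" using i by auto
      then have "\<not> v \<le> 2*n" using i cp_small[of v n] by auto
      then obtain i' j where ij: "i' \<in> {1..n}" "j \<le> nat (x i')" "v = 2*n+1 + prod_encode (i',j)"
        using cV_cases v by blast
      then have "i' = i" using cp_leaf[of n i' j] \<open>cp n v = i\<close> by simp
      then show "v \<in> (\<lambda>j. 2*n+1 + prod_encode (i,j)) ` {..nat (x i)}" using ij by auto
    qed
    show "(\<lambda>j. 2*n+1 + prod_encode (i,j)) ` {..nat (x i)} \<subseteq> {v\<in>cV n x - {0}. (v = i \<or> cp n v = i) \<and> \<not> v \<le> n}"
      using i cp_leaf[of n i] unfolding cV_def by auto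
  qed
  moreover have "card ((\<lambda>j. 2*n+1 + prod_encode (i,j)) ` {..nat (x i)}) = Suc (nat (x i))"
    by (subst card_image) (auto simp: inj_on_def)
  moreover have "{v\<in>cV n x - {0}. (v = i \<or> cp n v = i) \<and> v \<le> n} = {i}"
  proof (intro equalityI subsetI)
    fix v assume "v \<in> {v\<in>cV n x - {0}. (v = i \<or> cp n v = i) \<and> v \<le> n}"
    then show "v \<in> {i}" using cp_small[of v n] i by auto
  next
    fix v assume "v \<in> {i}"
    then show "v \<in> {v\<in>cV n x - {0}. (v = i \<or> cp n v = i) \<and> v \<le> n}"
      using in_cV_small[of v n x] i by auto
  qed
  ultimately show ?thesis unfolding c_sdeg using x by simp
qed

lemma c_realizes:
  assumes n: "n \<ge> 1" and x: "\<forall>i\<in>{1..n}. x i > 1"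
  shows "sdeg (cE n x) (cs n) ` cV n x = {1, 0} \<union> x ` {1..n}"
proof
  show "sdeg (cE n x) (cs n) ` cV n x \<subseteq> {1, 0} \<union> x ` {1..n}"
  proof
    fix d assume "d \<in> sdeg (cE n x) (cs n) ` cV n x"
    then obtain v where v: "v \<in> cV n x" "d = sdeg (cE n x) (cs n) v" by blast
    consider "v = 0" | "v \<in> {1..n}" | "n < v" by fastforce
    then show "d \<in> {1, 0} \<union> x ` {1..n}"
      by cases (use v sdeg_root sdeg_mid x sdeg_big in auto)
  qed
  show "{1, 0} \<union> x ` {1..n} \<subseteq> sdeg (cE n x) (cs n) ` cV n x"
  proof -
    have "n+1 \<in> cV n x" "0 \<in> cV n x" using n unfolding cV_def by auto
    then have "1 \<in> sdeg (cE n x) (cs n) ` cV n x" "0 \<in> sdeg (cE n x) (cs n) ` cV n x"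
      using sdeg_big[of "n+1" n x] sdeg_root[of n x] by (metis image_eqI less_add_one)+
    moreover have "x ` {1..n} \<subseteq> sdeg (cE n x) (cs n) ` cV n x"
    proof
      fix d assume "d \<in> x ` {1..n}"
      then obtain i where i: "i \<in> {1..n}" "d = x i" by blast
      then have "i \<in> cV n x" unfolding cV_def by auto
      then show "d \<in> sdeg (cE n x) (cs n) ` cV n x" using sdeg_mid[OF i(1)] x i(1) unfolding i(2)
        by (intro image_eqI[of _ _ i]) auto
    qed
    ultimately show ?thesis by blast
  qed
qed




lemma diam_le:
  assumes fV: "finite V" and ne: "V \<noteq> {}"
    and h: "\<And>u v. u \<in> V \<Longrightarrow> v \<in> V \<Longrightarrow> \<exists>W. is_walk V E W \<and> hd W = u \<and> last W = v \<and> length W \<le> Suc k"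
  shows "tree_diam V E \<le> k"
  unfolding tree_diam_def gdist_set_eq
proof (rule Max.boundedI)
  show "finite ((\<lambda>(u, v). gdist V E u v) ` (V \<times> V))" using fV by simp
  show "(\<lambda>(u, v). gdist V E u v) ` (V \<times> V) \<noteq> {}" using ne by simp
  fix d assume "d \<in> (\<lambda>(u, v). gdist V E u v) ` (V \<times> V)"
  then obtain u v where uv: "u \<in> V" "v \<in> V" "d = gdist V E u v" by auto
  obtain W where W: "is_walk V E W" "hd W = u" "last W = v" "length W \<le> Suc k" using h uv by blast
  show "d \<le> k" using gdist_le[OF W(1-3)] W(4) uv by simp
qed

lemma walk_join:
  assumes "is_walk V E A" "is_walk V E B" "hd A = u" "last A = w" "hd B = w" "last B = v"
  shows "is_walk V E (A @ tl B) \<and> hd (A @ tl B) = u \<and> last (A @ tl B) = v \<and> length (A @ tl B) = length A + length B - 1"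
  using walk_concat[OF assms(1,2)] last_concat[of A B] assms unfolding is_walk_def by (cases B) auto

lemma c_edge: "w \<in> cV n x \<Longrightarrow> w \<noteq> 0 \<Longrightarrow> {w, cp n w} \<in> cE n x"
  unfolding cE_def by blast

lemma c_graph: "is_graph (cV n x) (cE n x)"
  using c_tree unfolding is_tree_def by blast

lemma c_root_walk:
  assumes w: "w \<in> cV n x"
  shows "\<exists>W. is_walk (cV n x) (cE n x) W \<and> hd W = w \<and> last W = 0 \<and> length W \<le> 3"
proof -
  have g: "is_graph (cV n x) (cE n x)" by (rule c_graph)
  have z: "0 \<in> cV n x" unfolding cV_def by auto
  consider "w = 0" | "w \<noteq> 0" "cp n w = 0" | "w \<noteq> 0" "cp n w \<noteq> 0" by blast
  then show ?thesis
  proof cases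
    case 1 then show ?thesis using z by (intro exI[of _ "[0]"]) (auto simp: is_walk_def)
  next
    case 2
    then have "is_walk (cV n x) (cE n x) [w, 0]" using walk2[OF g c_edge[OF w]] by simp
    then show ?thesis by (intro exI[of _ "[w,0]"]) auto
  next
    case 3
    have pw: "cp n w \<in> cV n x" "cp n w \<le> n" using cp_ok w 3 cp_le[OF w] by auto
    have e1: "is_walk (cV n x) (cE n x) [w, cp n w]" using walk2[OF g c_edge[OF w 3(1)]] .
    have "cp n (cp n w) = 0" using pw cp_small by simp
    then have e2: "is_walk (cV n x) (cE n x) [cp n w, 0]" using walk2[OF g c_edge[OF pw(1) 3(2)]] by simp
    have "is_walk (cV n x) (cE n x) ([w, cp n w] @ tl [cp n w, 0])" by (rule walk_concat[OF e1 e2]) simp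
    then show ?thesis by (intro exI[of _ "[w, cp n w, 0]"]) auto
  qed
qed

lemma c_diam4: "tree_diam (cV n x) (cE n x) \<le> 4"
proof (rule diam_le[OF cV_fin])
  show "cV n x \<noteq> {}" unfolding cV_def by auto
  fix u v assume uv: "u \<in> cV n x" "v \<in> cV n x"
  obtain A where A: "is_walk (cV n x) (cE n x) A" "hd A = u" "last A = 0" "length A \<le> 3"
    using c_root_walk uv by blast
  obtain B where B: "is_walk (cV n x) (cE n x) B" "hd B = v" "last B = 0" "length B \<le> 3"
    using c_root_walk uv by blast
  have "is_walk (cV n x) (cE n x) (rev B)" "hd (rev B) = 0" "last (rev B) = v"
    using walk_rev B unfolding is_walk_def by (auto simp: hd_rev last_rev)
  then show "\<exists>W. is_walk (cV n x) (cE n x) W \<and> hd W = u \<and> last W = v \<and> length W \<le> Suc 4"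
  proof -
    note J = walk_join[OF A(1) \<open>is_walk (cV n x) (cE n x) (rev B)\<close> A(2,3) \<open>hd (rev B) = 0\<close> \<open>last (rev B) = v\<close>]
    show ?thesis using J A(4) B(4) by (intro exI[of _ "A @ tl (rev B)"]) auto
  qed
qed

lemma c_diam3:
  assumes n: "n = 1"
  shows "tree_diam (cV n x) (cE n x) \<le> 3"
proof (rule diam_le[OF cV_fin])
  have g: "is_graph (cV n x) (cE n x)" by (rule c_graph)
  show "cV n x \<noteq> {}" unfolding cV_def by auto
  have in01: "0 \<in> cV n x" "1 \<in> cV n x" using n unfolding cV_def by auto
  have e01: "{1, 0} \<in> cE n x" using c_edge[OF in01(2)] cp_small[of 1 n] n by simp
  have near: "\<exists>s W. s \<le> 1 \<and> is_walk (cV n x) (cE n x) W \<and> hd W = w \<and> last W = s \<and> length W \<le> 2"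
    if w: "w \<in> cV n x" for w
  proof (cases "w \<le> 1")
    case True
    then show ?thesis using w by (intro exI[of _ w] exI[of _ "[w]"]) (auto simp: is_walk_def)
  next
    case False
    then have "cp n w \<le> 1" using cp_le[OF w] n by simp
    moreover have "is_walk (cV n x) (cE n x) [w, cp n w]" using walk2[OF g c_edge[OF w]] False by simp
    ultimately show ?thesis by (intro exI[of _ "cp n w"] exI[of _ "[w, cp n w]"]) auto
  qed
  have mid: "\<exists>W. is_walk (cV n x) (cE n x) W \<and> hd W = s \<and> last W = t \<and> length W \<le> 2"
    if "s \<le> 1" "t \<le> 1" for s t :: nat
  proof (cases "s = t")
    case True
    then show ?thesis using in01 that by (intro exI[of _ "[s]"]) (auto simp: is_walk_def le_Suc_eq)
  next
    case False
    then have "{s, t} = {1, 0}" using that by (auto simp: le_Suc_eq)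
    then show ?thesis using walk2[OF g e01] e01 walk2[OF g, of s t] by (intro exI[of _ "[s, t]"]) auto
  qed
  fix u v assume uv: "u \<in> cV n x" "v \<in> cV n x"
  obtain s A where A: "s \<le> 1" "is_walk (cV n x) (cE n x) A" "hd A = u" "last A = s" "length A \<le> 2"
    using near uv by blast
  obtain t B where B: "t \<le> 1" "is_walk (cV n x) (cE n x) B" "hd B = v" "last B = t" "length B \<le> 2"
    using near uv by blast
  obtain M where M: "is_walk (cV n x) (cE n x) M" "hd M = s" "last M = t" "length M \<le> 2"
    using mid A(1) B(1) by blast
  have rB: "is_walk (cV n x) (cE n x) (rev B)" "hd (rev B) = t" "last (rev B) = v"
    using walk_rev B unfolding is_walk_def by (auto simp: hd_rev last_rev)
  obtain AM where AM: "is_walk (cV n x) (cE n x) AM" "hd AM = u" "last AM = t" "length AM \<le> 3"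
  proof -
    note J = walk_join[OF A(2) M(1) A(3,4) M(2,3)]
    show ?thesis using J A(5) M(4) by (intro that[of "A @ tl M"]) auto
  qed
  show "\<exists>W. is_walk (cV n x) (cE n x) W \<and> hd W = u \<and> last W = v \<and> length W \<le> Suc 3"
  proof -
    note J = walk_join[OF AM(1) rB(1) AM(2,3) rB(2,3)]
    show ?thesis using J AM(4) B(5) by (intro exI[of _ "AM @ tl (rev B)"]) auto
  qed
qed




lemma lowerD:
  fixes n :: nat and x :: "nat \<Rightarrow> int"
  assumes t: "is_tree V E" and r: "realizes V E s ({1, 0} \<union> x ` {1..n})"
    and n: "n \<ge> 1" and inj: "inj_on x {1..n}" and x: "\<forall>i\<in>{1..n}. x i > 1"
  shows "(if n = 1 then 3 else 4) \<le> tree_diam V E"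
proof -
  have g: "is_graph V E" and co: "connected_graph V E" using t unfolding is_tree_def by auto
  have D: "{1, 0} \<union> x ` {1..n} = sdeg E s ` V" using r unfolding realizes_def .
  have "0 \<in> sdeg E s ` V" using D by blast
  then obtain a where a: "a \<in> V" "sdeg E s a = 0" by auto
  have i1: "1 \<in> {1..n}" using n by simp
  have "x 1 \<in> sdeg E s ` V" using D i1 by blast
  then obtain b where b: "b \<in> V" "sdeg E s b = x 1" by auto
  have x1: "x 1 > 1" using x i1 by blast
  have ab: "a \<noteq> b" using a b x1 by auto
  have nb: "two_nbrs E b" using two_nbrs_pos[OF g, of s b] b x1 unfolding two_nbrs_def by simp
  have na: "two_nbrs E a" using two_nbrs_zero[OF g co a(1) b(1)] ab a(2) unfolding two_nbrs_def by simp
  show ?thesis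
  proof (cases "n = 1")
    case True
    then show ?thesis using lower3[OF t a(1) b(1) ab na nb] by simp
  next
    case False
    have i2: "2 \<in> {1..n}" using n False by simp
    have "x 2 \<in> sdeg E s ` V" using D i2 by blast
    then obtain c where c: "c \<in> V" "sdeg E s c = x 2" by auto
    have x2: "x 2 > 1" using x i2 by blast
    have "x 2 \<noteq> x 1" using inj i1 i2 unfolding inj_on_def by fastforce
    then have ac: "a \<noteq> c" and bc: "b \<noteq> c" using a b c x2 by auto
    have nc: "two_nbrs E c" using two_nbrs_pos[OF g, of s c] c x2 unfolding two_nbrs_def by simp
    show ?thesis using lower4[OF t a(1) b(1) c(1) ab ac bc na nb nc] False by simp
  qed
qed

theorem mainTheorem3:
  fixes n :: nat and x :: "nat \<Rightarrow> int"
  assumes "n \<ge> 1"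
    and "inj_on x {1..n}"
    and "\<forall>i\<in>{1..n}. x i > 1"
  shows "diam_set ({1, 0} \<union> x ` {1..n}) = (if n = 1 then 3 else 4)"
  unfolding diam_set_def
proof (rule Least_equality)
  have t: "is_tree (cV n x) (cE n x)" by (rule c_tree)
  have r: "realizes (cV n x) (cE n x) (cs n) ({1, 0} \<union> x ` {1..n})"
    unfolding realizes_def using c_realizes[OF assms(1,3)] by simp
  have lo: "(if n = 1 then 3 else 4) \<le> tree_diam (cV n x) (cE n x)" using lowerD[OF t r assms] .
  have hi: "tree_diam (cV n x) (cE n x) \<le> (if n = 1 then 3 else 4)"
    using c_diam3[of n x] c_diam4[of n x] by simp
  show "\<exists>V E s. is_tree V E \<and> realizes V E s ({1, 0} \<union> x ` {1..n}) \<and> tree_diam V E = (if n = 1 then 3 else 4)"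
    using t r lo hi by (intro exI[of _ "cV n x"] exI[of _ "cE n x"] exI[of _ "cs n"]) simp
next
  fix d assume "\<exists>V E s. is_tree V E \<and> realizes V E s ({1, 0} \<union> x ` {1..n}) \<and> tree_diam V E = d"
  then obtain V E s where "is_tree V E" "realizes V E s ({1, 0} \<union> x ` {1..n})" "tree_diam V E = d" by blast
  then show "(if n = 1 then 3 else 4) \<le> d" using lowerD assms by blast
qed


end
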